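(* Let $n=2k+1$ be odd and let $B$ be an $n\times n$ ASM. Then there exist $n\times n$ permutation matrices $P_1,\ldots,P_k,P_{k+2},\ldots,P_n$ such that $[P_1,\ldots,P_k,B,P_{k+2},\ldots,P_n]$ (with $B$ as the $(k+1)$-st horizontal plane) is an $n\times n\times n$ ASHM.
   Context: An $n\times n$ alternating sign matrix (ASM) is an $n\times n$ matrix with entries in $\{0,1,-1\}$ such that in every row and column the nonzeros alternate in sign, beginning and ending with $+1$. An $n\times n\times n$ hypermatrix $[A_1,\ldots,A_n]$ ($A_s$ the horizontal planes) is an ASHM if all entries are in $\{0,\pm1\}$ and in every line (obtained by fixing two of the three indices) the nonzeros alternate in sign beginning and ending with $+1$. *)

theory Defs
  imports Main
begin

text \<open>An n x n matrix is represented as a function nat => nat => int, with only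
  entries at indices i, j < n relevant (0-based indexing).
  An n x n x n hypermatrix [A_1,...,A_n] is represented as H :: nat => nat => nat => int,
  where H s i j is entry (i,j) of the horizontal plane A_(s+1).\<close>

definition alt_sign_list :: "int list \<Rightarrow> bool" where
  "alt_sign_list xs \<longleftrightarrow>
     set xs \<subseteq> {0, 1, -1} \<and>
     (let ys = filter (\<lambda>x. x \<noteq> 0) xs in
        ys \<noteq> [] \<and> hd ys = 1 \<and> last ys = 1 \<and>
        (\<forall>i. Suc i < length ys \<longrightarrow> ys ! Suc i = - (ys ! i)))"

definition is_ASM :: "nat \<Rightarrow> (nat \<Rightarrow> nat \<Rightarrow> int) \<Rightarrow> bool" where
  "is_ASM n A \<longleftrightarrow>
     (\<forall>i<n. alt_sign_list (map (\<lambda>j. A i j) [0..<n])) \<and>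
     (\<forall>j<n. alt_sign_list (map (\<lambda>i. A i j) [0..<n]))"

definition is_perm_matrix :: "nat \<Rightarrow> (nat \<Rightarrow> nat \<Rightarrow> int) \<Rightarrow> bool" where
  "is_perm_matrix n P \<longleftrightarrow>
     (\<exists>\<sigma>. bij_betw \<sigma> {..<n} {..<n} \<and>
          (\<forall>i<n. \<forall>j<n. P i j = (if \<sigma> i = j then 1 else 0)))"

definition is_ASHM :: "nat \<Rightarrow> (nat \<Rightarrow> nat \<Rightarrow> nat \<Rightarrow> int) \<Rightarrow> bool" where
  "is_ASHM n H \<longleftrightarrow>
     (\<forall>s<n. \<forall>i<n. alt_sign_list (map (\<lambda>j. H s i j) [0..<n])) \<and>
     (\<forall>s<n. \<forall>j<n. alt_sign_list (map (\<lambda>i. H s i j) [0..<n])) \<and>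
     (\<forall>i<n. \<forall>j<n. alt_sign_list (map (\<lambda>s. H s i j) [0..<n]))"

end

theory Submission
  imports Defs
begin


lemma hall_aux:
  "finite I \<Longrightarrow> (\<And>i. i\<in>I \<Longrightarrow> finite (A i)) \<Longrightarrow> (\<And>S. S\<subseteq>I \<Longrightarrow> card S \<le> card (\<Union>(A`S)))
   \<Longrightarrow> \<exists>f. (\<forall>i\<in>I. f i \<in> A i) \<and> inj_on f I"
proof (induction "card I" arbitrary: I A rule: less_induct)
  case less
  show ?case
  proof (cases "I = {}")
    case True then show ?thesis by simp
  next
    case False
    show ?thesis
    proof (cases "\<exists>S. S \<subseteq> I \<and> S \<noteq> {} \<and> S \<noteq> I \<and> card (\<Union>(A`S)) \<le> card S")
      case True
      then obtain S where S: "S \<subseteq> I" "S \<noteq> {}" "S \<noteq> I" "card (\<Union>(A`S)) \<le> card S" by blast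
      have finS: "finite S" using S(1) less.prems(1) finite_subset by blast
      have cS: "card S < card I" using S by (meson less.prems(1) psubsetI psubset_card_mono)
      obtain f1 where f1: "\<forall>i\<in>S. f1 i \<in> A i" "inj_on f1 S"
      proof -
        have "\<And>i. i \<in> S \<Longrightarrow> finite (A i)" using less.prems(2) S(1) by blast
        moreover have "\<And>T. T \<subseteq> S \<Longrightarrow> card T \<le> card (\<Union>(A`T))"
          using less.prems(3) S(1) by blast
        ultimately show ?thesis using less.hyps[OF cS finS, of A] that by blast
      qed
      define X where "X = \<Union>(A`S)"
      have cX: "card X = card S" using less.prems(3)[OF S(1)] S(4) X_def by simp
      define A2 where "A2 = (\<lambda>i. A i - X)"
      have cI2: "card (I - S) < card I"
        proof -
        have "card S > 0" using finS S(2) by auto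
        then show ?thesis using S(1) finS cS by (simp add: card_Diff_subset)
      qed
      have hall2: "card T \<le> card (\<Union>(A2`T))" if T: "T \<subseteq> I - S" for T
      proof -
        have finT: "finite T" using T less.prems(1) finite_subset by blast
        have eq: "\<Union>(A2`T) = \<Union>(A`(T \<union> S)) - X" by (auto simp: A2_def X_def)
        have TS: "T \<union> S \<subseteq> I" using T S(1) by blast
        have finU: "finite (\<Union>(A`(T\<union>S)))" using TS less.prems(1,2) finite_subset by blast
        have sub: "X \<subseteq> \<Union>(A`(T\<union>S))" by (auto simp: X_def)
        have "card (\<Union>(A2`T)) = card (\<Union>(A`(T\<union>S))) - card X"
          using eq finU sub by (simp add: card_Diff_subset finite_subset)
        moreover have "card (T \<union> S) \<le> card (\<Union>(A`(T\<union>S)))" using less.prems(3)[OF TS] .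
        moreover have "card (T \<union> S) = card T + card S"
          using T finT finS by (intro card_Un_disjoint) auto
        ultimately show ?thesis using cX by linarith
      qed
      have finI2: "finite (I - S)" using less.prems(1) by simp
      obtain f2 where f2: "\<forall>i\<in>I-S. f2 i \<in> A2 i" "inj_on f2 (I-S)"
      proof -
        have "\<And>i. i \<in> I - S \<Longrightarrow> finite (A2 i)" using less.prems(2) by (simp add: A2_def)
        then show ?thesis using less.hyps[OF cI2 finI2, of A2] hall2 that by blast
      qed
      define f where "f = (\<lambda>i. if i \<in> S then f1 i else f2 i)"
      have "\<forall>i\<in>I. f i \<in> A i" using f1 f2 by (auto simp: f_def A2_def)
      moreover have "inj_on f I"
      proof (rule inj_onI)
        fix x y assume xy: "x \<in> I" "y \<in> I" "f x = f y"
        have inX: "f1 i \<in> X" if "i \<in> S" for i using f1 that X_def by auto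
        have ninX: "f2 i \<notin> X" if "i \<in> I - S" for i using f2 that A2_def by auto
        show "x = y"
          using xy inX ninX f1(2) f2(2) unfolding f_def inj_on_def
          by (metis Diff_iff)
      qed
      ultimately show ?thesis by blast
    next
      case False
      have big: "card S < card (\<Union>(A`S))" if "S \<subseteq> I" "S \<noteq> {}" "S \<noteq> I" for S
        using False that not_le by blast
      obtain i0 where i0: "i0 \<in> I" using \<open>I \<noteq> {}\<close> by blast
      have "card {i0} \<le> card (\<Union>(A`{i0}))" using less.prems(3)[of "{i0}"] i0 by simp
      then have "A i0 \<noteq> {}" by auto
      then obtain a where a: "a \<in> A i0" by blast
      define A2 where "A2 = (\<lambda>i. A i - {a})"
      define I2 where "I2 = I - {i0}"
      have cI2: "card I2 < card I" proof -
        have "card I > 0" using i0 less.prems(1) card_gt_0_iff by blast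
        then show ?thesis using i0 less.prems(1) by (simp add: I2_def)
      qed
      have finI2: "finite I2" using less.prems(1) I2_def by simp
      have hall2: "card T \<le> card (\<Union>(A2`T))" if T: "T \<subseteq> I2" for T
      proof (cases "T = {}")
        case True then show ?thesis by simp
      next
        case False
        have TI: "T \<subseteq> I" "T \<noteq> I" using T i0 I2_def by auto
        have finU: "finite (\<Union>(A`T))" using TI less.prems(1,2) finite_subset by blast
        have "\<Union>(A2`T) = \<Union>(A`T) - {a}" by (auto simp: A2_def)
        then have "card (\<Union>(A2`T)) \<ge> card (\<Union>(A`T)) - 1"
          using finU by (simp add: card_Diff_singleton_if)
        then show ?thesis using big[OF TI(1) False TI(2)] by linarith
      qed
      obtain f2 where f2: "\<forall>i\<in>I2. f2 i \<in> A2 i" "inj_on f2 I2"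
      proof -
        have "\<And>i. i \<in> I2 \<Longrightarrow> finite (A2 i)" using less.prems(2) by (simp add: A2_def I2_def)
        then show ?thesis using less.hyps[OF cI2 finI2, of A2] hall2 that by blast
      qed
      define f where "f = f2(i0 := a)"
      have "\<forall>i\<in>I. f i \<in> A i" using f2 a by (auto simp: f_def A2_def I2_def)
      moreover have "inj_on f I"
      proof (rule inj_onI)
        fix x y assume xy: "x \<in> I" "y \<in> I" "f x = f y"
        have na: "f2 i \<noteq> a" if "i \<in> I2" for i using f2(1) that by (auto simp: A2_def)
        show "x = y"
        proof (cases "x = i0"; cases "y = i0")
          assume "x \<noteq> i0" "y \<noteq> i0"
          then show ?thesis using xy f2(2) by (auto simp: f_def I2_def inj_on_def)
        qed (use xy na in \<open>auto simp: f_def I2_def\<close>)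
      qed
      ultimately show ?thesis by blast
    qed
  qed
qed


lemma perfect_matching:
  fixes L :: "nat \<Rightarrow> nat \<Rightarrow> bool"
  assumes r: "r > 0"
    and rows: "\<forall>i<n. card {j. j < n \<and> L i j} = r"
    and cols: "\<forall>j<n. card {i. i < n \<and> L i j} = r"
  shows "\<exists>\<sigma>. bij_betw \<sigma> {..<n} {..<n} \<and> (\<forall>i<n. L i (\<sigma> i))"
proof -
  define A where "A = (\<lambda>i. {j. j < n \<and> L i j})"
  have hallc: "card S \<le> card (\<Union>(A`S))" if S: "S \<subseteq> {..<n}" for S
  proof -
    define X where "X = \<Union>(A`S)"
    have finS: "finite S" using S finite_subset by blast
    have "X \<subseteq> {..<n}" by (auto simp: X_def A_def)
    then have finX: "finite X" using finite_subset by blast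
    have "card (SIGMA i:S. A i) = (\<Sum>i\<in>S. card (A i))"
      using finS by (simp add: card_SigmaI A_def)
    also have "\<dots> = (\<Sum>i\<in>S. r)" using rows S by (intro sum.cong) (auto simp: A_def)
    also have "\<dots> = r * card S" by simp
    finally have c1: "card (SIGMA i:S. A i) = r * card S" .
    have "card ((\<lambda>(j,i). (i,j)) ` (SIGMA j:X. {i. i < n \<and> L i j})) = card (SIGMA j:X. {i. i < n \<and> L i j})"
      by (rule card_image) (auto simp: inj_on_def)
    also have "\<dots> = (\<Sum>j\<in>X. card {i. i < n \<and> L i j})" using finX by (simp add: card_SigmaI)
    also have "\<dots> = (\<Sum>j\<in>X. r)" using cols \<open>X \<subseteq> {..<n}\<close> by (intro sum.cong) auto
    also have "\<dots> = r * card X" by simp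
    finally have c2: "card ((\<lambda>(j,i). (i,j)) ` (SIGMA j:X. {i. i < n \<and> L i j})) = r * card X" .
    have sub: "(SIGMA i:S. A i) \<subseteq> (\<lambda>(j,i). (i,j)) ` (SIGMA j:X. {i. i < n \<and> L i j})"
      using S by (force simp: X_def A_def image_iff)
    have "finite ((\<lambda>(j,i). (i,j)) ` (SIGMA j:X. {i. i < n \<and> L i j}))"
      using finX by auto
    then have "r * card S \<le> r * card X" using c1 c2 sub card_mono by metis
    then show ?thesis using r X_def by simp
  qed
  obtain f where f: "\<forall>i\<in>{..<n}. f i \<in> A i" "inj_on f {..<n}"
    using hall_aux[of "{..<n}" A] hallc by (auto simp: A_def)
  have img: "f ` {..<n} \<subseteq> {..<n}" using f(1) by (auto simp: A_def)
  have "card (f ` {..<n}) = card {..<n}" using f(2) card_image by blast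
  then have "f ` {..<n} = {..<n}" using img by (simp add: card_subset_eq)
  then have "bij_betw f {..<n} {..<n}" using f(2) by (simp add: bij_betw_def)
  moreover have "\<forall>i<n. L i (f i)" using f(1) by (auto simp: A_def)
  ultimately show ?thesis by blast
qed

lemma konig:
  fixes n r :: nat
  shows "\<And>L :: nat \<Rightarrow> nat \<Rightarrow> bool. (\<forall>i<n. card {j. j < n \<and> L i j} = r) \<Longrightarrow> (\<forall>j<n. card {i. i < n \<and> L i j} = r) \<Longrightarrow>
   \<exists>\<sigma>. (\<forall>t<r. bij_betw (\<sigma> t) {..<n} {..<n}) \<and>
       (\<forall>i<n. \<forall>j<n. card {t. t < r \<and> \<sigma> t i = j} = (if L i j then 1 else 0))"
proof (induction r)
  case 0
  have "\<not> L i j" if "i < n" "j < n" for i j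
  proof -
    have "finite {j. j < n \<and> L i j}" by (rule finite_subset[OF _ finite_lessThan[of n]]) auto
    then have "{j. j < n \<and> L i j} = {}" using 0 that by auto
    then show ?thesis using that by auto
  qed
  then show ?case by auto
next
  case (Suc r)
  obtain \<tau> where \<tau>: "bij_betw \<tau> {..<n} {..<n}" "\<forall>i<n. L i (\<tau> i)"
    using perfect_matching[of "Suc r" n L] Suc.prems by auto
  define L' where "L' = (\<lambda>i j. L i j \<and> \<tau> i \<noteq> j)"
  have rows': "\<forall>i<n. card {j. j < n \<and> L' i j} = r"
  proof (intro allI impI)
    fix i assume i: "i < n"
    have "{j. j < n \<and> L' i j} = {j. j < n \<and> L i j} - {\<tau> i}" by (auto simp: L'_def)
    moreover have "\<tau> i \<in> {j. j < n \<and> L i j}" using \<tau> i bij_betwE by blast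
    ultimately show "card {j. j < n \<and> L' i j} = r" using Suc.prems(1) i by simp
  qed
  have cols': "\<forall>j<n. card {i. i < n \<and> L' i j} = r"
  proof (intro allI impI)
    fix j assume j: "j < n"
    obtain i0 where i0: "i0 < n" "\<tau> i0 = j" using \<tau>(1) j by (metis bij_betw_iff_bijections lessThan_iff)
    have u: "\<tau> i = j \<longleftrightarrow> i = i0" if "i < n" for i
      using \<tau>(1) i0 that by (metis bij_betw_iff_bijections lessThan_iff)
    have "{i. i < n \<and> L' i j} = {i. i < n \<and> L i j} - {i0}" using u by (auto simp: L'_def)
    moreover have "i0 \<in> {i. i < n \<and> L i j}" using \<tau>(2) i0 by auto
    ultimately show "card {i. i < n \<and> L' i j} = r" using Suc.prems(2) j by simp
  qed
  obtain \<sigma>' where \<sigma>': "\<forall>t<r. bij_betw (\<sigma>' t) {..<n} {..<n}"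
      "\<forall>i<n. \<forall>j<n. card {t. t < r \<and> \<sigma>' t i = j} = (if L' i j then 1 else 0)"
    using Suc.IH[OF rows' cols'] by blast
  define \<sigma> where "\<sigma> = \<sigma>'(r := \<tau>)"
  have "\<forall>t<Suc r. bij_betw (\<sigma> t) {..<n} {..<n}" using \<sigma>' \<tau> by (auto simp: \<sigma>_def less_Suc_eq)
  moreover have "\<forall>i<n. \<forall>j<n. card {t. t < Suc r \<and> \<sigma> t i = j} = (if L i j then 1 else 0)"
  proof (intro allI impI)
    fix i j assume ij: "i < n" "j < n"
    have eq: "{t. t < Suc r \<and> \<sigma> t i = j} = {t. t < r \<and> \<sigma>' t i = j} \<union> (if \<tau> i = j then {r} else {})"
      by (auto simp: \<sigma>_def less_Suc_eq)
    have "card {t. t < Suc r \<and> \<sigma> t i = j} = card {t. t < r \<and> \<sigma>' t i = j} + (if \<tau> i = j then 1 else 0)"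
      unfolding eq by (subst card_Un_disjoint) auto
    then show "card {t. t < Suc r \<and> \<sigma> t i = j} = (if L i j then 1 else 0)"
      using \<sigma>'(2) ij \<tau>(2) by (auto simp: L'_def)
  qed
  ultimately show ?case by blast
qed


lemma filter01: "set xs \<subseteq> {0, 1::int} \<Longrightarrow> filter (\<lambda>x. x \<noteq> 0) xs = replicate (nat (sum_list xs)) 1"
proof (induction xs)
  case Nil then show ?case by simp
next
  case (Cons x xs)
  have s: "sum_list xs \<ge> 0" using Cons.prems
    by (intro sum_list_nonneg) auto
  show ?case using Cons s by (auto simp: nat_add_distrib)
qed

lemma alt01: "set xs \<subseteq> {0, 1::int} \<Longrightarrow> sum_list xs = 1 \<Longrightarrow> alt_sign_list xs"
  using filter01[of xs] by (auto simp: alt_sign_list_def)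

lemma sum_filter_nz: "sum_list (filter (\<lambda>x. x \<noteq> 0) xs) = sum_list (xs::int list)"
  by (induction xs) auto

lemma alt_nth: "(\<forall>i. Suc i < length ys \<longrightarrow> ys ! Suc i = - (ys ! i)) \<Longrightarrow> ys \<noteq> [] \<Longrightarrow> hd ys = 1
   \<Longrightarrow> i < length ys \<Longrightarrow> ys ! i = (-1::int) ^ i"
proof (induction i)
  case 0 then show ?case by (simp add: hd_conv_nth)
next
  case (Suc i) then show ?case by simp
qed

lemma alt_sum_pow: "(\<forall>i<length ys. ys ! i = (-1::int) ^ i) \<Longrightarrow> sum_list ys = (if even (length ys) then 0 else 1)"
proof (induction ys rule: rev_induct)
  case Nil then show ?case by simp
next
  case (snoc y ys)
  have "\<forall>i<length ys. ys ! i = (-1::int) ^ i"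
  proof (intro allI impI)
    fix i assume "i < length ys"
    then show "ys ! i = (-1::int) ^ i" using snoc.prems[rule_format, of i] by (simp add: nth_append)
  qed
  then have "sum_list ys = (if even (length ys) then 0 else 1)" using snoc.IH by blast
  moreover have "y = (-1) ^ length ys" using snoc.prems[rule_format, of "length ys"] by simp
  ultimately show ?case by auto
qed

lemma alt_sum: "alt_sign_list xs \<Longrightarrow> sum_list xs = 1"
proof -
  assume a: "alt_sign_list xs"
  define ys where "ys = filter (\<lambda>x. x \<noteq> 0) xs"
  have ne: "ys \<noteq> []" and hd: "hd ys = 1" and la: "last ys = 1"
    and alt: "\<forall>i. Suc i < length ys \<longrightarrow> ys ! Suc i = - (ys ! i)"
    using a by (auto simp: alt_sign_list_def ys_def Let_def)
  have nth: "\<forall>i<length ys. ys ! i = (-1::int) ^ i" using alt_nth[OF alt ne hd] by blast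
  have "last ys = ys ! (length ys - 1)" using ne by (simp add: last_conv_nth)
  then have "(-1::int) ^ (length ys - 1) = 1" using nth la ne by simp
  then have "even (length ys - 1)"
  proof -
    assume h: "(-1::int) ^ (length ys - 1) = 1"
    show ?thesis
    proof (rule ccontr)
      assume "odd (length ys - 1)"
      then have "(-1::int) ^ (length ys - 1) = -1" by (simp add: neg_one_odd_power)
      then show False using h by simp
    qed
  qed
  then have "odd (length ys)" using ne by (cases "length ys") auto
  then have "sum_list ys = 1" using alt_sum_pow[OF nth] by simp
  then show ?thesis by (simp add: ys_def sum_filter_nz)
qed

lemma card_ind: "finite A \<Longrightarrow> int (card {j \<in> A. P j}) = (\<Sum>j\<in>A. if P j then 1 else 0)"
  using sum.inter_filter[of A "\<lambda>_. (1::int)" P] by simp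

lemma card_ind_lt: "int (card {j. j < (n::nat) \<and> P j}) = (\<Sum>j<n. if P j then 1 else 0)"
proof -
  have "{j. j < n \<and> P j} = {j\<in>{..<n}. P j}" by auto
  then show ?thesis using card_ind[of "{..<n}" P] by simp
qed

lemma alt_counts:
  fixes g :: "nat \<Rightarrow> int"
  assumes "alt_sign_list (map g [0..<n])" "n = 2 * k + 1"
  shows "card {j. j < n \<and> g j = -1} \<le> k \<and> card {j. j < n \<and> g j = 0} = 2 * (k - card {j. j < n \<and> g j = -1})
     \<and> (\<forall>j<n. g j \<in> {0, 1, -1})"
proof -
  have "set (map g [0..<n]) \<subseteq> {0, 1, -1}" using assms(1) by (simp add: alt_sign_list_def)
  then have vals: "\<forall>j<n. g j \<in> {0, 1, -1}" by (auto simp: image_subset_iff)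
  have "sum_list (map g [0..<n]) = 1" using alt_sum[OF assms(1)] .
  then have s1: "(\<Sum>j\<in>{..<n}. g j) = 1" by (simp add: interv_sum_list_conv_sum_set_nat atLeast0LessThan)
  have "(\<Sum>j\<in>{..<n}. g j) = (\<Sum>j\<in>{..<n}. (if g j = 1 then 1 else 0) - (if g j = -1 then 1 else 0))"
    using vals by (intro sum.cong) auto
  also have "\<dots> = int (card {j. j < n \<and> g j = 1}) - int (card {j. j < n \<and> g j = -1})"
    by (simp add: sum_subtractf card_ind_lt)
  finally have e1: "int (card {j. j < n \<and> g j = 1}) - int (card {j. j < n \<and> g j = -1}) = 1" using s1 by simp
  have "int n = (\<Sum>j\<in>{..<n}. (1::int))" by simp
  also have "\<dots> = (\<Sum>j\<in>{..<n}. (if g j = 1 then 1 else 0) + (if g j = -1 then 1 else 0) + (if g j = 0 then 1 else 0))"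
    using vals by (intro sum.cong) auto
  also have "\<dots> = int (card {j. j < n \<and> g j = 1}) + int (card {j. j < n \<and> g j = -1}) + int (card {j. j < n \<and> g j = 0})"
    by (simp add: sum.distrib card_ind_lt)
  finally have e2: "int n = int (card {j. j < n \<and> g j = 1}) + int (card {j. j < n \<and> g j = -1}) + int (card {j. j < n \<and> g j = 0})" .
  show ?thesis using e1 e2 vals assms(2) by auto
qed


lemma split_LU:
  fixes B :: "nat \<Rightarrow> nat \<Rightarrow> int" and n k :: nat
  assumes n: "n = 2 * k + 1" and asm: "is_ASM n B"
  shows "\<exists>c. (\<forall>i<n. card {j. j < n \<and> (B i j = -1 \<or> (B i j = 0 \<and> c i j))} = k)
           \<and> (\<forall>j<n. card {i. i < n \<and> (B i j = -1 \<or> (B i j = 0 \<and> c i j))} = k)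
           \<and> (\<forall>i<n. card {j. j < n \<and> (B i j = -1 \<or> (B i j = 0 \<and> \<not> c i j))} = k)
           \<and> (\<forall>j<n. card {i. i < n \<and> (B i j = -1 \<or> (B i j = 0 \<and> \<not> c i j))} = k)"
proof -
  define m where "m = (\<lambda>i. card {j. j < n \<and> B i j = -1})"
  define cm where "cm = (\<lambda>j. card {i. i < n \<and> B i j = -1})"
  have rm: "m i \<le> k \<and> card {j. j < n \<and> B i j = 0} = 2 * (k - m i)" if "i < n" for i
    using alt_counts[of "B i" n k] asm that n by (auto simp: is_ASM_def m_def)
  have rc: "cm j \<le> k \<and> card {i. i < n \<and> B i j = 0} = 2 * (k - cm j)" if "j < n" for j
    using alt_counts[of "\<lambda>i. B i j" n k] asm that n by (auto simp: is_ASM_def cm_def)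
  define E where "E = {(i,j). i < n \<and> j < n \<and> B i j = 0}"
  define RS where "RS = (\<lambda>i. (\<lambda>t. (True,i,t)) ` {..<k - m i})"
  define CS where "CS = (\<lambda>j. (\<lambda>t. (False,j,t)) ` {..<k - cm j})"
  define Aa where "Aa = (\<lambda>e. RS (fst e) \<union> CS (snd e))"
  have cardRS: "card (RS i) = k - m i" for i
    unfolding RS_def by (subst card_image) (auto simp: inj_on_def)
  have cardCS: "card (CS j) = k - cm j" for j
    unfolding CS_def by (subst card_image) (auto simp: inj_on_def)
  have finRS: "finite (RS i)" for i by (simp add: RS_def)
  have finCS: "finite (CS i)" for i by (simp add: CS_def)
  have cardRU: "card (\<Union>i\<in>I. RS i) = (\<Sum>i\<in>I. k - m i)" if "finite I" for I
  proof -
    have "card (\<Union>i\<in>I. RS i) = (\<Sum>i\<in>I. card (RS i))"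
      using that finRS by (intro card_UN_disjoint) (auto simp: RS_def)
    then show ?thesis by (simp add: cardRS)
  qed
  have cardCU: "card (\<Union>i\<in>I. CS i) = (\<Sum>i\<in>I. k - cm i)" if "finite I" for I
  proof -
    have "card (\<Union>i\<in>I. CS i) = (\<Sum>i\<in>I. card (CS i))"
      using that finCS by (intro card_UN_disjoint) (auto simp: CS_def)
    then show ?thesis by (simp add: cardCS)
  qed
  have cardRCU: "card ((\<Union>i\<in>I. RS i) \<union> (\<Union>j\<in>J. CS j)) = (\<Sum>i\<in>I. k - m i) + (\<Sum>j\<in>J. k - cm j)"
    if "finite I" "finite J" for I J
  proof -
    have "card ((\<Union>i\<in>I. RS i) \<union> (\<Union>j\<in>J. CS j)) = card (\<Union>i\<in>I. RS i) + card (\<Union>j\<in>J. CS j)"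
      using that finRS finCS by (intro card_Un_disjoint) (auto simp: RS_def CS_def)
    then show ?thesis using cardRU cardCU that by simp
  qed
  have Esub: "E \<subseteq> {..<n} \<times> {..<n}" by (auto simp: E_def)
  have finE: "finite E" using Esub finite_subset by blast
  have hallc: "card S \<le> card (\<Union>(Aa`S))" if S: "S \<subseteq> E" for S
  proof -
    have finS: "finite S" using S finE finite_subset by blast
    have U: "\<Union>(Aa`S) = (\<Union>i\<in>fst`S. RS i) \<union> (\<Union>j\<in>snd`S. CS j)" by (auto simp: Aa_def)
    have cU: "card (\<Union>(Aa`S)) = (\<Sum>i\<in>fst`S. k - m i) + (\<Sum>j\<in>snd`S. k - cm j)"
      unfolding U using finS by (intro cardRCU) auto
    have fstS: "fst ` S \<subseteq> {..<n}" "snd ` S \<subseteq> {..<n}" using S by (auto simp: E_def)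
    have "S \<subseteq> (SIGMA i:fst`S. {j. j < n \<and> B i j = 0})" using S by (force simp: E_def)
    then have "card S \<le> card (SIGMA i:fst`S. {j. j < n \<and> B i j = 0})"
      using finS by (intro card_mono) auto
    also have "\<dots> = (\<Sum>i\<in>fst`S. card {j. j < n \<and> B i j = 0})"
      using finS by (intro card_SigmaI) auto
    also have "\<dots> = (\<Sum>i\<in>fst`S. 2 * (k - m i))" using rm fstS by (intro sum.cong) auto
    finally have b1: "card S \<le> 2 * (\<Sum>i\<in>fst`S. k - m i)" by (simp add: sum_distrib_left)
    have "S \<subseteq> (\<lambda>(j,i). (i,j)) ` (SIGMA j:snd`S. {i. i < n \<and> B i j = 0})" using S by (force simp: E_def image_iff)
    then have "card S \<le> card ((\<lambda>(j,i). (i,j)) ` (SIGMA j:snd`S. {i. i < n \<and> B i j = 0}))"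
      using finS by (intro card_mono) auto
    also have "\<dots> \<le> card (SIGMA j:snd`S. {i. i < n \<and> B i j = 0})" by (rule card_image_le) (use finS in auto)
    also have "\<dots> = (\<Sum>j\<in>snd`S. card {i. i < n \<and> B i j = 0})"
      using finS by (intro card_SigmaI) auto
    also have "\<dots> = (\<Sum>j\<in>snd`S. 2 * (k - cm j))" using rc fstS by (intro sum.cong) auto
    finally have b2: "card S \<le> 2 * (\<Sum>j\<in>snd`S. k - cm j)" by (simp add: sum_distrib_left)
    show ?thesis using b1 b2 cU by linarith
  qed
  obtain f where f: "\<forall>e\<in>E. f e \<in> Aa e" "inj_on f E"
    using hall_aux[of E Aa] finE hallc finRS finCS by (auto simp: Aa_def)
  define Slots where "Slots = (\<Union>i\<in>{..<n}. RS i) \<union> (\<Union>j\<in>{..<n}. CS j)"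
  have cSlots: "card Slots = (\<Sum>i<n. k - m i) + (\<Sum>j<n. k - cm j)"
    unfolding Slots_def by (intro cardRCU) auto
  have "E = (SIGMA i:{..<n}. {j. j < n \<and> B i j = 0})" by (auto simp: E_def)
  then have "card E = (\<Sum>i<n. card {j. j < n \<and> B i j = 0})" by (simp add: card_SigmaI)
  also have "\<dots> = (\<Sum>i<n. 2 * (k - m i))" using rm by (intro sum.cong) auto
  finally have cE1: "card E = 2 * (\<Sum>i<n. k - m i)" by (simp add: sum_distrib_left)
  have "E = (\<lambda>(j,i). (i,j)) ` (SIGMA j:{..<n}. {i. i < n \<and> B i j = 0})" by (force simp: E_def image_iff)
  then have "card E = card (SIGMA j:{..<n}. {i. i < n \<and> B i j = 0})"
    by (simp add: card_image inj_on_def)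
  also have "\<dots> = (\<Sum>j<n. card {i. i < n \<and> B i j = 0})" by (simp add: card_SigmaI)
  also have "\<dots> = (\<Sum>j<n. 2 * (k - cm j))" using rc by (intro sum.cong) auto
  finally have cE2: "card E = 2 * (\<Sum>j<n. k - cm j)" by (simp add: sum_distrib_left)
  have fE: "f ` E \<subseteq> Slots"
  proof
    fix x assume "x \<in> f ` E"
    then obtain e where e: "e \<in> E" "x = f e" by blast
    then have "x \<in> Aa e" using f(1) by blast
    then show "x \<in> Slots" using e(1) by (auto simp: Aa_def Slots_def E_def)
  qed
  have finSlots: "finite Slots" by (simp add: Slots_def finRS finCS)
  have "card (f ` E) = card E" using f(2) card_image by blast
  then have cfE: "card (f ` E) = card Slots" using cSlots cE1 cE2 by simp
  have fEs: "f ` E = Slots" using card_subset_eq[OF finSlots fE cfE] .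
  define c where "c = (\<lambda>i j. fst (f (i,j)))"
  have rowF: "card {j. j < n \<and> B i j = 0 \<and> c i j} = k - m i" if i: "i < n" for i
  proof -
    define F where "F = {j. j < n \<and> B i j = 0 \<and> c i j}"
    have "(\<lambda>j. f (i,j)) ` F = RS i"
    proof
      show "(\<lambda>j. f (i,j)) ` F \<subseteq> RS i"
      proof
        fix x assume "x \<in> (\<lambda>j. f (i,j)) ` F"
        then obtain j where j: "j \<in> F" "x = f (i,j)" by blast
        then have "(i,j) \<in> E" using i by (auto simp: F_def E_def)
        then have "x \<in> RS i \<union> CS j" using f(1) j by (auto simp: Aa_def)
        moreover have "fst x" using j by (auto simp: F_def c_def)
        ultimately show "x \<in> RS i" by (auto simp: CS_def)
      qed
    next
      show "RS i \<subseteq> (\<lambda>j. f (i,j)) ` F"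
      proof
        fix x assume x: "x \<in> RS i"
        then have "x \<in> Slots" using i by (auto simp: Slots_def)
        then obtain e where e: "e \<in> E" "x = f e" using fEs by blast
        then have "x \<in> RS (fst e) \<union> CS (snd e)" using f(1) by (auto simp: Aa_def)
        then have "x \<in> RS (fst e)" using x by (auto simp: RS_def CS_def)
        then have "fst e = i" using x by (auto simp: RS_def)
        then have "e = (i, snd e)" by (cases e) auto
        moreover have "snd e \<in> F" using e x \<open>fst e = i\<close> \<open>e = (i, snd e)\<close>
          by (auto simp: F_def E_def c_def RS_def)
        ultimately show "x \<in> (\<lambda>j. f (i,j)) ` F" using e by (metis image_eqI)
      qed
    qed
    moreover have "inj_on (\<lambda>j. f (i,j)) F"
      using f(2) i by (auto simp: inj_on_def F_def E_def)
    ultimately have "card F = card (RS i)" using card_image by metis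
    then show ?thesis using cardRS F_def by simp
  qed
  have colG: "card {i. i < n \<and> B i j = 0 \<and> \<not> c i j} = k - cm j" if j: "j < n" for j
  proof -
    define G where "G = {i. i < n \<and> B i j = 0 \<and> \<not> c i j}"
    have "(\<lambda>i. f (i,j)) ` G = CS j"
    proof
      show "(\<lambda>i. f (i,j)) ` G \<subseteq> CS j"
      proof
        fix x assume "x \<in> (\<lambda>i. f (i,j)) ` G"
        then obtain i where i: "i \<in> G" "x = f (i,j)" by blast
        then have "(i,j) \<in> E" using j by (auto simp: G_def E_def)
        then have "x \<in> RS i \<union> CS j" using f(1) i by (auto simp: Aa_def)
        moreover have "\<not> fst x" using i by (auto simp: G_def c_def)
        ultimately show "x \<in> CS j" by (auto simp: RS_def)
      qed
    next
      show "CS j \<subseteq> (\<lambda>i. f (i,j)) ` G"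
      proof
        fix x assume x: "x \<in> CS j"
        then have "x \<in> Slots" using j by (auto simp: Slots_def)
        then obtain e where e: "e \<in> E" "x = f e" using fEs by blast
        then have "x \<in> RS (fst e) \<union> CS (snd e)" using f(1) by (auto simp: Aa_def)
        then have "x \<in> CS (snd e)" using x by (auto simp: RS_def CS_def)
        then have "snd e = j" using x by (auto simp: CS_def)
        then have "e = (fst e, j)" by (cases e) auto
        moreover have "fst e \<in> G" using e x \<open>snd e = j\<close> \<open>e = (fst e, j)\<close>
          by (auto simp: G_def E_def c_def CS_def)
        ultimately show "x \<in> (\<lambda>i. f (i,j)) ` G" using e by (metis image_eqI)
      qed
    qed
    moreover have "inj_on (\<lambda>i. f (i,j)) G"
      using f(2) j by (auto simp: inj_on_def G_def E_def)
    ultimately have "card G = card (CS j)" using card_image by metis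
    then show ?thesis using cardCS G_def by simp
  qed
  have fin1: "finite {j. j < n \<and> P j}" for P :: "nat \<Rightarrow> bool" by (rule finite_subset[OF _ finite_lessThan[of n]]) auto
  have cnt: "card {j. j < n \<and> (B' j = -1 \<or> (B' j = 0 \<and> Q j))} = card {j. j < n \<and> B' j = -1} + card {j. j < n \<and> B' j = 0 \<and> Q j}"
    for B' :: "nat \<Rightarrow> int" and Q
  proof -
    have "{j. j < n \<and> (B' j = -1 \<or> (B' j = 0 \<and> Q j))} = {j. j < n \<and> B' j = -1} \<union> {j. j < n \<and> B' j = 0 \<and> Q j}" by auto
    then show ?thesis using fin1 by (simp add: card_Un_disjoint disjoint_iff)
  qed
  have cnt2: "card {j. j < n \<and> B' j = 0 \<and> \<not> Q j} = card {j. j < n \<and> B' j = 0} - card {j. j < n \<and> B' j = 0 \<and> Q j}"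
    for B' :: "nat \<Rightarrow> int" and Q
  proof -
    have "{j. j < n \<and> B' j = 0 \<and> \<not> Q j} = {j. j < n \<and> B' j = 0} - {j. j < n \<and> B' j = 0 \<and> Q j}" by auto
    then show ?thesis using fin1 by (simp add: card_Diff_subset subset_iff)
  qed
  have cnt2': "card {j. j < n \<and> B' j = 0 \<and> Q j} = card {j. j < n \<and> B' j = 0} - card {j. j < n \<and> B' j = 0 \<and> \<not> Q j}"
    for B' :: "nat \<Rightarrow> int" and Q
    using cnt2[of B' "\<lambda>j. \<not> Q j"] by simp
  have "\<forall>i<n. card {j. j < n \<and> (B i j = -1 \<or> (B i j = 0 \<and> c i j))} = k"
    using cnt[of "B _" "c _"] rowF rm m_def by auto
  moreover have "\<forall>j<n. card {i. i < n \<and> (B i j = -1 \<or> (B i j = 0 \<and> c i j))} = k"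
  proof (intro allI impI)
    fix j assume j: "j < n"
    show "card {i. i < n \<and> (B i j = -1 \<or> (B i j = 0 \<and> c i j))} = k"
      using cnt[of "\<lambda>i. B i j" "\<lambda>i. c i j"] cnt2'[of "\<lambda>i. B i j" "\<lambda>i. c i j"] colG[OF j] rc[OF j] cm_def by auto
  qed
  moreover have "\<forall>i<n. card {j. j < n \<and> (B i j = -1 \<or> (B i j = 0 \<and> \<not> c i j))} = k"
  proof (intro allI impI)
    fix i assume i: "i < n"
    show "card {j. j < n \<and> (B i j = -1 \<or> (B i j = 0 \<and> \<not> c i j))} = k"
      using cnt[of "B i" "\<lambda>j. \<not> c i j"] cnt2[of "B i" "c i"] rowF[OF i] rm[OF i] m_def by auto
  qed
  moreover have "\<forall>j<n. card {i. i < n \<and> (B i j = -1 \<or> (B i j = 0 \<and> \<not> c i j))} = k"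
    using cnt[of "\<lambda>i. B i _" "\<lambda>i. \<not> c i _"] colG rc cm_def by auto
  ultimately show ?thesis by blast
qed


lemma perm_row_alt:
  assumes "bij_betw \<sigma> {..<n} {..<n}" "i < n"
  shows "alt_sign_list (map (\<lambda>j. if \<sigma> i = j then (1::int) else 0) [0..<n])"
proof (rule alt01)
  show "set (map (\<lambda>j. if \<sigma> i = j then (1::int) else 0) [0..<n]) \<subseteq> {0, 1}" by auto
  have "\<sigma> i < n" using assms bij_betwE by blast
  then have e: "{j. j < n \<and> \<sigma> i = j} = {\<sigma> i}" by auto
  have "sum_list (map (\<lambda>j. if \<sigma> i = j then (1::int) else 0) [0..<n]) = (\<Sum>j<n. if \<sigma> i = j then 1 else 0)"
    by (simp add: interv_sum_list_conv_sum_set_nat atLeast0LessThan)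
  also have "\<dots> = int (card {j. j < n \<and> \<sigma> i = j})" by (rule card_ind_lt[symmetric])
  also have "\<dots> = 1" unfolding e by simp
  finally show "sum_list (map (\<lambda>j. if \<sigma> i = j then (1::int) else 0) [0..<n]) = 1" .
qed

lemma perm_col_alt:
  assumes "bij_betw \<sigma> {..<n} {..<n}" "j < n"
  shows "alt_sign_list (map (\<lambda>i. if \<sigma> i = j then (1::int) else 0) [0..<n])"
proof (rule alt01)
  show "set (map (\<lambda>i. if \<sigma> i = j then (1::int) else 0) [0..<n]) \<subseteq> {0, 1}" by auto
  obtain i0 where i0: "i0 < n" "\<sigma> i0 = j" using assms by (metis bij_betw_iff_bijections lessThan_iff)
  have "\<sigma> i = j \<longleftrightarrow> i = i0" if "i < n" for i
    using assms(1) i0 that by (metis bij_betw_iff_bijections lessThan_iff)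
  then have e: "{i. i < n \<and> \<sigma> i = j} = {i0}" using i0 by auto
  have "sum_list (map (\<lambda>i. if \<sigma> i = j then (1::int) else 0) [0..<n]) = (\<Sum>i<n. if \<sigma> i = j then 1 else 0)"
    by (simp add: interv_sum_list_conv_sum_set_nat atLeast0LessThan)
  also have "\<dots> = int (card {i. i < n \<and> \<sigma> i = j})" by (rule card_ind_lt[symmetric])
  also have "\<dots> = 1" unfolding e by simp
  finally show "sum_list (map (\<lambda>i. if \<sigma> i = j then (1::int) else 0) [0..<n]) = 1" .
qed

lemma vert:
  fixes xs ys :: "int list" and b :: int
  assumes "set xs \<subseteq> {0,1}" "set ys \<subseteq> {0,1}" "b \<in> {0,1,-1}"
    and "b = 1 \<Longrightarrow> sum_list xs = 0 \<and> sum_list ys = 0"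
    and "b = 0 \<Longrightarrow> sum_list xs + sum_list ys = 1"
    and "b = -1 \<Longrightarrow> sum_list xs = 1 \<and> sum_list ys = 1"
  shows "alt_sign_list (xs @ [b] @ ys)"
proof -
  have fx: "filter (\<lambda>x. x \<noteq> 0) xs = replicate (nat (sum_list xs)) 1" using filter01 assms(1) .
  have fy: "filter (\<lambda>x. x \<noteq> 0) ys = replicate (nat (sum_list ys)) 1" using filter01 assms(2) .
  have nx: "sum_list xs \<ge> 0" using assms(1) by (intro sum_list_nonneg) auto
  have ny: "sum_list ys \<ge> 0" using assms(2) by (intro sum_list_nonneg) auto
  have st: "set (xs @ [b] @ ys) \<subseteq> {0,1,-1}" using assms(1-3) by auto
  have "filter (\<lambda>x. x \<noteq> 0) (xs @ [b] @ ys) = [1] \<or> filter (\<lambda>x. x \<noteq> 0) (xs @ [b] @ ys) = [1,-1,1]"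
  proof -
    consider "b = 1" | "b = 0" | "b = -1" using assms(3) by auto
    then show ?thesis
    proof cases
      case 1 then show ?thesis using fx fy assms(4) by simp
    next
      case 2
      then have "(sum_list xs = 1 \<and> sum_list ys = 0) \<or> (sum_list xs = 0 \<and> sum_list ys = 1)"
        using assms(5) nx ny by linarith
      then show ?thesis using fx fy 2 by auto
    next
      case 3 then show ?thesis using fx fy assms(6) by simp
    qed
  qed
  then show ?thesis
  proof
    assume h: "filter (\<lambda>x. x \<noteq> 0) (xs @ [b] @ ys) = [1]"
    show ?thesis using st unfolding alt_sign_list_def Let_def h by simp
  next
    assume h: "filter (\<lambda>x. x \<noteq> 0) (xs @ [b] @ ys) = [1,-1,1]"
    show ?thesis using st unfolding alt_sign_list_def Let_def h by (auto simp: less_Suc_eq nth_Cons')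
  qed
qed

theorem mainTheorem17:
  fixes k n :: nat and B :: "nat \<Rightarrow> nat \<Rightarrow> int"
  assumes "n = 2 * k + 1"
    and "is_ASM n B"
  shows "\<exists>P :: nat \<Rightarrow> nat \<Rightarrow> nat \<Rightarrow> int.
           (\<forall>s<n. s \<noteq> k \<longrightarrow> is_perm_matrix n (P s)) \<and>
           is_ASHM n (\<lambda>s. if s = k then B else P s)"
proof -
  obtain c where c: "\<forall>i<n. card {j. j < n \<and> (B i j = -1 \<or> (B i j = 0 \<and> c i j))} = k"
           "\<forall>j<n. card {i. i < n \<and> (B i j = -1 \<or> (B i j = 0 \<and> c i j))} = k"
           "\<forall>i<n. card {j. j < n \<and> (B i j = -1 \<or> (B i j = 0 \<and> \<not> c i j))} = k"
           "\<forall>j<n. card {i. i < n \<and> (B i j = -1 \<or> (B i j = 0 \<and> \<not> c i j))} = k"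
    using split_LU[OF assms] by blast
  define Lr where "Lr = (\<lambda>i j. B i j = -1 \<or> (B i j = 0 \<and> c i j))"
  define Ur where "Ur = (\<lambda>i j. B i j = -1 \<or> (B i j = 0 \<and> \<not> c i j))"
  obtain \<sigma>L where \<sigma>L: "\<forall>t<k. bij_betw (\<sigma>L t) {..<n} {..<n}"
      "\<forall>i<n. \<forall>j<n. card {t. t < k \<and> \<sigma>L t i = j} = (if Lr i j then 1 else 0)"
    using konig[where n=n and r=k and L=Lr] c(1,2) unfolding Lr_def by blast
  obtain \<sigma>U where \<sigma>U: "\<forall>t<k. bij_betw (\<sigma>U t) {..<n} {..<n}"
      "\<forall>i<n. \<forall>j<n. card {t. t < k \<and> \<sigma>U t i = j} = (if Ur i j then 1 else 0)"
    using konig[where n=n and r=k and L=Ur] c(3,4) unfolding Ur_def by blast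
  define P where "P = (\<lambda>s i j. if s < k then (if \<sigma>L s i = j then 1 else 0)
                        else (if \<sigma>U (s - Suc k) i = j then (1::int) else 0))"
  have vals: "\<forall>i<n. \<forall>j<n. B i j \<in> {0, 1, -1}"
    using alt_counts[of "\<lambda>j. B _ j" n k] assms by (auto simp: is_ASM_def)
  have permP: "\<exists>\<sigma>. bij_betw \<sigma> {..<n} {..<n} \<and> P s = (\<lambda>i j. if \<sigma> i = j then 1 else 0)"
    if "s < n" "s \<noteq> k" for s
  proof (cases "s < k")
    case True then show ?thesis using \<sigma>L(1) by (intro exI[of _ "\<sigma>L s"]) (auto simp: P_def)
  next
    case False
    then have "s - Suc k < k" using that assms(1) by auto
    then show ?thesis using \<sigma>U(1) False by (intro exI[of _ "\<sigma>U (s - Suc k)"]) (auto simp: P_def)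
  qed
  have part1: "\<forall>s<n. s \<noteq> k \<longrightarrow> is_perm_matrix n (P s)"
    using permP unfolding is_perm_matrix_def by metis
  define H where "H = (\<lambda>s. if s = k then B else P s)"
  have rows: "alt_sign_list (map (\<lambda>j. H s i j) [0..<n])" if "s < n" "i < n" for s i
  proof (cases "s = k")
    case True then show ?thesis using assms(2) that by (simp add: H_def is_ASM_def)
  next
    case False
    obtain \<sigma> where "bij_betw \<sigma> {..<n} {..<n}" "P s = (\<lambda>i j. if \<sigma> i = j then 1 else 0)"
      using permP \<open>s < n\<close> False by blast
    then show ?thesis using perm_row_alt[of \<sigma> n i] that False by (simp add: H_def)
  qed
  have cols: "alt_sign_list (map (\<lambda>i. H s i j) [0..<n])" if "s < n" "j < n" for s j
  proof (cases "s = k")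
    case True then show ?thesis using assms(2) that by (simp add: H_def is_ASM_def)
  next
    case False
    obtain \<sigma> where "bij_betw \<sigma> {..<n} {..<n}" "P s = (\<lambda>i j. if \<sigma> i = j then 1 else 0)"
      using permP \<open>s < n\<close> False by blast
    then show ?thesis using perm_col_alt[of \<sigma> n j] that False by (simp add: H_def)
  qed
  have verts: "alt_sign_list (map (\<lambda>s. H s i j) [0..<n])" if ij: "i < n" "j < n" for i j
  proof -
    define xs where "xs = map (\<lambda>t. if \<sigma>L t i = j then (1::int) else 0) [0..<k]"
    define ys where "ys = map (\<lambda>t. if \<sigma>U t i = j then (1::int) else 0) [0..<k]"
    have upt: "[0..<n] = [0..<k] @ k # map (\<lambda>t. t + Suc k) [0..<k]"
    proof -
      have a: "map (\<lambda>t. t + Suc k) [0..<k] = [Suc k..<k + Suc k]" by (rule map_add_upt)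
      have b: "[0..<k + Suc k] = [0..<k] @ [k..<k + Suc k]" by (rule upt_add_eq_append) simp
      have c: "[k..<k + Suc k] = k # [Suc k..<k + Suc k]" by (rule upt_conv_Cons) simp
      have "n = k + Suc k" using assms(1) by simp
      then show ?thesis using a b c by simp
    qed
    have eq: "map (\<lambda>s. H s i j) [0..<n] = xs @ [B i j] @ ys"
      unfolding upt by (simp add: xs_def ys_def H_def P_def)
    have sx: "sum_list xs = (if Lr i j then 1 else 0)"
    proof -
      have "sum_list xs = (\<Sum>t<k. if \<sigma>L t i = j then 1 else 0)"
        by (simp add: xs_def interv_sum_list_conv_sum_set_nat atLeast0LessThan)
      also have "\<dots> = int (card {t. t < k \<and> \<sigma>L t i = j})" by (rule card_ind_lt[symmetric])
      finally show ?thesis using \<sigma>L(2) ij by simp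
    qed
    have sy: "sum_list ys = (if Ur i j then 1 else 0)"
    proof -
      have "sum_list ys = (\<Sum>t<k. if \<sigma>U t i = j then 1 else 0)"
        by (simp add: ys_def interv_sum_list_conv_sum_set_nat atLeast0LessThan)
      also have "\<dots> = int (card {t. t < k \<and> \<sigma>U t i = j})" by (rule card_ind_lt[symmetric])
      finally show ?thesis using \<sigma>U(2) ij by simp
    qed
    have "alt_sign_list (xs @ [B i j] @ ys)"
      by (rule vert) (use vals ij sx sy in \<open>auto simp: xs_def ys_def Lr_def Ur_def\<close>)
    then show ?thesis using eq by simp
  qed
  have "is_ASHM n H" unfolding is_ASHM_def using rows cols verts by blast
  then show ?thesis using part1 unfolding H_def by blast
qed

end
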